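(* Let $R$ be a commutative ring with unity. Every element of $X(R)$ can be written as $\sum_{n=0}^\infty V^n\langle a_n\rangle$ for some $a_n\in R$ (the series converging in the product topology of $R^{\mathbb N_0}$).
   Context: Fix a prime $p$. $R^{\mathbb N_0}$ has the product topology; $V(r_0,r_1,\dots)=p(0,r_0,r_1,\dots)$; $\langle r\rangle=(r,r^p,r^{p^2},\dots)$; $X(R)$ is the closed subgroup of $R^{\mathbb N_0}$ generated by $\{V^n\langle r\rangle\mid n\in\mathbb N_0,r\in R\}$. *)

theory Defs
  imports "HOL-Analysis.Analysis"
begin

definition prodtop :: "(nat \<Rightarrow> 'a) topology" where
  "prodtop = product_topology (\<lambda>_. discrete_topology (UNIV :: 'a set)) UNIV"

definition Ver :: "nat \<Rightarrow> (nat \<Rightarrow> 'a::comm_ring_1) \<Rightarrow> (nat \<Rightarrow> 'a)" where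
  "Ver p r = (\<lambda>k. case k of 0 \<Rightarrow> 0 | Suc j \<Rightarrow> of_nat p * r j)"

definition teich :: "nat \<Rightarrow> 'a::comm_ring_1 \<Rightarrow> (nat \<Rightarrow> 'a)" where
  "teich p r = (\<lambda>k. r ^ (p ^ k))"

inductive_set add_subgroup_gen :: "(nat \<Rightarrow> 'b::ab_group_add) set \<Rightarrow> (nat \<Rightarrow> 'b) set" for S where
  zero: "(\<lambda>k. 0) \<in> add_subgroup_gen S"
| gen: "x \<in> S \<Longrightarrow> x \<in> add_subgroup_gen S"
| diff: "x \<in> add_subgroup_gen S \<Longrightarrow> y \<in> add_subgroup_gen S \<Longrightarrow> (\<lambda>k. x k - y k) \<in> add_subgroup_gen S"

text \<open>X(R): the closure of the subgroup generated by the V^n <r>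
  (the closure of a subgroup of a topological group is the smallest closed subgroup containing it).\<close>
definition XR :: "nat \<Rightarrow> (nat \<Rightarrow> 'a::comm_ring_1) set" where
  "XR p = prodtop closure_of add_subgroup_gen {(Ver p ^^ n) (teich p r) | n r. True}"

end

theory Submission
  imports Defs "HOL-Library.Poly_Mapping"
begin


definition dv :: "nat \<Rightarrow> nat \<Rightarrow> 'b::comm_ring_1 \<Rightarrow> bool" where
  "dv p k x \<longleftrightarrow> (\<exists>t. x = of_nat p ^ k * t)"

lemma dv_0[simp]: "dv p k 0" unfolding dv_def by (rule exI[of _ 0]) simp

lemma dv_add: "dv p k x \<Longrightarrow> dv p k y \<Longrightarrow> dv p k (x + y)"
  unfolding dv_def by (metis distrib_left)

lemma dv_diff: "dv p k x \<Longrightarrow> dv p k y \<Longrightarrow> dv p k (x - y)"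
  unfolding dv_def by (metis right_diff_distrib)

lemma dv_mult: "dv p k x \<Longrightarrow> dv p k (y * x)"
  unfolding dv_def by (metis mult.left_commute)

lemma dv_mono: "j \<le> k \<Longrightarrow> dv p k x \<Longrightarrow> dv p j x"
  unfolding dv_def by (metis le_add_diff_inverse mult.assoc power_add)

lemma dv_pmul: "dv p k x \<Longrightarrow> dv p (m + k) (of_nat p ^ m * x)"
  unfolding dv_def by (metis mult.assoc power_add)

lemma dv_sum: "(\<And>i. i \<in> I \<Longrightarrow> dv p k (f i)) \<Longrightarrow> dv p k (sum f I)"
  by (induction I rule: infinite_finite_induct) (auto intro: dv_add)

lemma dv_pow_diff: "dv p k (x - y) \<Longrightarrow> dv p k (x ^ i - y ^ i)"
  using power_diff_sumr2[of x i y] dv_mult by (metis mult.commute)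

lemma dv_frob:
  fixes x y :: "'b::comm_ring_1"
  assumes "k \<ge> 1" "p \<ge> 1" "dv p k (x - y)"
  shows "dv p (Suc k) (x ^ p - y ^ p)"
proof -
  define S where "S = (\<Sum>i<p. y^(p - Suc i) * x^i)"
  have e: "x^p - y^p = (x - y) * S" unfolding S_def by (rule power_diff_sumr2)
  have "S = (\<Sum>i<p. y^(p - Suc i) * (x^i - y^i)) + (\<Sum>i<p. y^(p - Suc i) * y^i)"
    unfolding S_def by (simp add: algebra_simps sum.distrib[symmetric])
  also have "(\<Sum>i<p. y^(p - Suc i) * y^i) = (\<Sum>i<p. y^(p - 1))"
    by (rule sum.cong) (auto simp: power_add[symmetric])
  also have "\<dots> = of_nat p * y^(p-1)" by simp
  finally have S: "S = (\<Sum>i<p. y^(p - Suc i) * (x^i - y^i)) + of_nat p * y^(p-1)" .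
  have "dv p 1 S" unfolding S
    apply (rule dv_add)
     apply (rule dv_sum) apply (rule dv_mult) apply (rule dv_mono[OF assms(1)]) apply (rule dv_pow_diff[OF assms(3)])
    unfolding dv_def by auto
  then obtain s where s: "S = of_nat p * s" unfolding dv_def by auto
  from assms(3) obtain t where t: "x - y = of_nat p ^ k * t" unfolding dv_def by auto
  show ?thesis unfolding dv_def e s t by (rule exI[of _ "t * s"]) (simp add: algebra_simps)
qed

lemma dv_frob_iter:
  fixes x y :: "'b::comm_ring_1"
  assumes "p \<ge> 1" "dv p (Suc k) (x - y)"
  shows "dv p (Suc k + m) (x ^ (p ^ m) - y ^ (p ^ m))"
proof (induction m)
  case 0 then show ?case using assms by simp
next
  case (Suc m)
  have "dv p (Suc (Suc k + m)) ((x ^ (p ^ m)) ^ p - (y ^ (p ^ m)) ^ p)"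
    by (rule dv_frob) (use Suc assms in auto)
  then show ?case by (simp add: power_mult[symmetric] mult.commute)
qed

lemma dv_binom:
  fixes x y :: "'b::comm_ring_1"
  assumes "prime p"
  shows "dv p 1 ((x + y) ^ p - x ^ p - y ^ p)"
proof -
  have p0: "p \<noteq> 0" using assms by auto
  define c where "c k = (if k = 0 \<or> k = p then 0 else of_nat (p choose k) * x^k * y^(p-k))" for k
  have "(x + y) ^ p = (\<Sum>k\<le>p. of_nat (p choose k) * x^k * y^(p-k))" by (rule binomial_ring)
  also have "\<dots> = (\<Sum>k\<le>p. c k + ((if k = p then x^p else 0) + (if k = 0 then y^p else 0)))"
    by (rule sum.cong) (auto simp: c_def p0)
  also have "\<dots> = (\<Sum>k\<le>p. c k) + x^p + y^p"
    by (simp add: sum.distrib)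
  finally have e: "(x + y) ^ p - x ^ p - y ^ p = (\<Sum>k\<le>p. c k)" by simp
  have "dv p 1 (c k)" for k
  proof (cases "k = 0 \<or> k = p")
    case True then show ?thesis by (simp add: c_def)
  next
    case False
    then have "k < p" if "k \<le> p" using that by auto
    show ?thesis
    proof (cases "k \<le> p")
      case True
      then have "p dvd (p choose k)" using False by (intro dvd_choose_prime) (auto simp: assms p0)
      then obtain q where "p choose k = p * q" by auto
      then show ?thesis using False unfolding c_def dv_def
        by (intro exI[of _ "of_nat q * x^k * y^(p-k)"]) (simp add: algebra_simps)
    next
      case False2: False
      then show ?thesis by (simp add: c_def binomial_eq_0)
    qed
  qed
  then show ?thesis unfolding e by (intro dv_sum)
qed



definition wt :: "nat \<Rightarrow> (nat \<Rightarrow> 'b::comm_ring_1) \<Rightarrow> nat \<Rightarrow> 'b" where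
  "wt p a k = (\<Sum>m\<le>k. of_nat p ^ m * a m ^ (p ^ (k - m)))"

lemma wt_Suc: "wt p a (Suc K) = (\<Sum>m\<le>K. of_nat p^m * a m ^ (p^(Suc K - m))) + of_nat p^Suc K * a (Suc K)"
  by (simp add: wt_def)

lemma wt_cong: "(\<forall>i\<le>K. a i = b i) \<Longrightarrow> wt p a K = wt p b K"
  unfolding wt_def by (intro sum.cong) auto

lemma wt_upd: "wt p (a(Suc K := t)) (Suc K) = (\<Sum>m\<le>K. of_nat p^m * a m ^ (p^(Suc K - m))) + of_nat p^Suc K * t"
proof -
  have "(\<Sum>m\<le>K. of_nat p^m * (a(Suc K := t)) m ^ (p^(Suc K - m))) = (\<Sum>m\<le>K. of_nat p^m * a m ^ (p^(Suc K - m)))"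
    by (intro sum.cong) auto
  then show ?thesis by (simp add: wt_Suc)
qed

lemma build_seq:
  fixes W :: "(nat \<Rightarrow> 'c) \<Rightarrow> nat \<Rightarrow> 'b"
  assumes loc: "\<And>c c' K. (\<forall>i\<le>K. c i = c' i) \<Longrightarrow> W c K = W c' K"
  and base: "\<exists>c. W c 0 = x 0"
  and step: "\<And>K c. (\<forall>i\<le>K. W c i = x i) \<Longrightarrow> \<exists>t. W (c(Suc K := t)) (Suc K) = x (Suc K)"
  shows "\<exists>a. \<forall>K. W a K = x K"
proof -
  define s where "s = rec_nat (SOME c. W c 0 = x 0) (\<lambda>K c. c(Suc K := (SOME t. W (c(Suc K := t)) (Suc K) = x (Suc K))))"
  have s0: "s 0 = (SOME c. W c 0 = x 0)" and sS: "s (Suc K) = (s K)(Suc K := SOME t. W ((s K)(Suc K := t)) (Suc K) = x (Suc K))" for K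
    by (simp_all add: s_def)
  have P: "\<forall>i\<le>K. W (s K) i = x i" for K
  proof (induction K)
    case 0 then show ?case using someI_ex[OF base] by (simp add: s0)
  next
    case (Suc K)
    have t: "W (s (Suc K)) (Suc K) = x (Suc K)" unfolding sS by (rule someI_ex[OF step[OF Suc]])
    have "W (s (Suc K)) i = x i" if "i \<le> K" for i
    proof -
      have "W (s (Suc K)) i = W (s K) i" by (rule loc) (use that in \<open>auto simp: sS\<close>)
      then show ?thesis using Suc that by auto
    qed
    then show ?case using t le_Suc_eq by auto
  qed
  have st: "s L i = s i i" if "i \<le> L" for i L
    using that
  proof (induction L)
    case 0 then show ?case by simp
  next
    case (Suc L) then show ?case by (cases "i = Suc L") (auto simp: sS)
  qed
  define a where "a i = s i i" for i
  have "W a K = x K" for K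
  proof -
    have "\<forall>i\<le>K. a i = s K i" unfolding a_def using st by metis
    then have "W a K = W (s K) K" by (rule loc)
    then show ?thesis using P by auto
  qed
  then show ?thesis by auto
qed

definition hom :: "('b::comm_ring_1 \<Rightarrow> 'c::comm_ring_1) \<Rightarrow> bool" where
  "hom h \<longleftrightarrow> h 1 = 1 \<and> (\<forall>x y. h (x + y) = h x + h y) \<and> (\<forall>x y. h (x * y) = h x * h y)"

lemma hom_add: "hom h \<Longrightarrow> h (x + y) = h x + h y" by (simp add: hom_def)
lemma hom_mult: "hom h \<Longrightarrow> h (x * y) = h x * h y" by (simp add: hom_def)
lemma hom_one: "hom h \<Longrightarrow> h 1 = 1" by (simp add: hom_def)
lemma hom_zero: "hom h \<Longrightarrow> h 0 = 0"
  using hom_add[of h 0 0] by simp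
lemma hom_uminus: "hom h \<Longrightarrow> h (- x) = - h x"
  using hom_add[of h x "-x"] hom_zero[of h] by (simp add: minus_unique)
lemma hom_diff: "hom h \<Longrightarrow> h (x - y) = h x - h y"
  using hom_add[of h x "-y"] hom_uminus[of h y] by simp
lemma hom_sum: "hom h \<Longrightarrow> h (sum f I) = (\<Sum>i\<in>I. h (f i))"
  by (induction I rule: infinite_finite_induct) (auto simp: hom_zero hom_add)
lemma hom_power: "hom h \<Longrightarrow> h (x ^ n) = h x ^ n"
  by (induction n) (auto simp: hom_one hom_mult)
lemma hom_of_nat: "hom h \<Longrightarrow> h (of_nat n) = of_nat n"
  by (induction n) (auto simp: hom_one hom_add hom_zero)
lemma hom_wt: "hom h \<Longrightarrow> h (wt p a k) = wt p (h \<circ> a) k"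
  by (simp add: wt_def hom_sum hom_mult hom_power hom_of_nat)

lemma wt_zero_tors:
  fixes d :: "nat \<Rightarrow> 'b::comm_ring_1"
  assumes p: "p \<ge> 1" and z: "\<forall>i\<le>K. wt p d i = 0"
  shows "i \<le> K \<Longrightarrow> of_nat p ^ i * d i = 0"
proof (induction i rule: less_induct)
  case (less i)
  show ?case
  proof (cases i)
    case 0
    have "wt p d 0 = 0" using z by simp
    then show ?thesis using 0 by (simp add: wt_def)
  next
    case (Suc j)
    have "of_nat p^m * d m ^ (p^(Suc j - m)) = 0" if "m \<le> j" for m
    proof -
      have pos: "p^(Suc j - m) \<noteq> 0" using p by simp
      then obtain e where e: "p^(Suc j - m) = Suc e" using not0_implies_Suc by blast
      have "of_nat p^m * d m ^ (p^(Suc j - m)) = (of_nat p^m * d m) * d m ^ e"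
        unfolding e by (simp only: power_Suc ac_simps)
      also have "of_nat p^m * d m = 0" using less.IH[of m] that Suc less.prems by simp
      finally show ?thesis by simp
    qed
    then have s0: "(\<Sum>m\<le>j. of_nat p^m * d m ^ (p^(Suc j - m))) = 0" by simp
    have "wt p d (Suc j) = 0" using z less.prems Suc by simp
    then show ?thesis unfolding wt_Suc s0 using Suc by simp
  qed
qed

lemma wt_zero_next:
  fixes d :: "nat \<Rightarrow> 'b::comm_ring_1"
  assumes p: "p \<ge> 1" and z: "\<forall>i\<le>K. wt p d i = 0"
  shows "wt p d (Suc K) = of_nat p ^ Suc K * d (Suc K)"
proof -
  have "of_nat p^m * d m ^ (p^(Suc K - m)) = 0" if "m \<le> K" for m
  proof -
    have pos: "p^(Suc K - m) \<noteq> 0" using p by simp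
    then obtain e where e: "p^(Suc K - m) = Suc e" using not0_implies_Suc by blast
    have "of_nat p^m * d m ^ (p^(Suc K - m)) = (of_nat p^m * d m) * d m ^ e"
      unfolding e by (simp only: power_Suc ac_simps)
    also have "of_nat p^m * d m = 0" using wt_zero_tors[OF p z that] by simp
    finally show ?thesis by simp
  qed
  then have s0: "(\<Sum>m\<le>K. of_nat p^m * d m ^ (p^(Suc K - m))) = 0" by simp
  show ?thesis unfolding wt_Suc s0 by simp
qed



datatype 'a mw = MW (unMW: 'a)

instantiation mw :: (comm_monoid_mult) comm_monoid_add
begin
definition zero_mw_def: "0 = MW 1"
definition plus_mw_def: "x + y = MW (unMW x * unMW y)"
instance by standard (auto simp: zero_mw_def plus_mw_def ac_simps)
end

lemma unMW_zero[simp]: "unMW 0 = 1" by (simp add: zero_mw_def)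
lemma MW_one[simp]: "MW 1 = 0" by (simp add: zero_mw_def)

definition ext :: "('m::comm_monoid_add \<Rightarrow> 'b::comm_ring_1) \<Rightarrow> ('m \<Rightarrow>\<^sub>0 int) \<Rightarrow> 'b" where
  "ext F x = (\<Sum>k\<in>Poly_Mapping.keys x. of_int (Poly_Mapping.lookup x k) * F k)"

lemma ext_add: "ext F (x + y) = ext F x + ext F y"
  unfolding ext_def by (rule setsum_keys_plus_distrib) (auto simp: distrib_right)

lemma ext_zero: "ext F 0 = 0" by (simp add: ext_def)

lemma ext_uminus: "ext F (- x) = - ext F x"
  unfolding ext_def by (simp add: sum_negf)

lemma ext_diff: "ext F (x - y) = ext F x - ext F y"
  using ext_add[of F x "-y"] ext_uminus[of F y] by simp

lemma ext_single: "ext F (Poly_Mapping.single k c) = of_int c * F k"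
  by (cases "c = 0") (auto simp: ext_def)

lemma one_single: "(1 :: 'm::comm_monoid_add \<Rightarrow>\<^sub>0 int) = Poly_Mapping.single 0 1"
  by (rule poly_mapping_eqI) (simp add: lookup_one lookup_single when_def)

lemma ext_mult:
  assumes Fadd: "\<And>a b. F (a + b) = F a * F b"
  shows "ext F (x * y) = ext F x * ext F y"
proof -
  have oneL: "ext F (frag_of a * y) = ext F (frag_of a) * ext F y" for a
  using subset_UNIV[of "Poly_Mapping.keys y"]
  proof (induction y rule: frag_induction)
    case zero then show ?case by (simp add: ext_zero)
  next
    case (one b) then show ?case by (simp add: mult_single ext_single Fadd)
  next
    case (diff u v) then show ?case by (simp add: right_diff_distrib ext_diff)
  qed
  show ?thesis
  using subset_UNIV[of "Poly_Mapping.keys x"]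
  proof (induction x rule: frag_induction)
    case zero then show ?case by (simp add: ext_zero)
  next
    case (one a) show ?case by (rule oneL)
  next
    case (diff u v) then show ?case by (simp add: left_diff_distrib ext_diff)
  qed
qed

lemma hom_ext:
  assumes F0: "F 0 = 1" and Fadd: "\<And>a b. F (a + b) = F a * F b"
  shows "hom (ext F)"
proof -
  have "ext F 1 = 1" unfolding one_single ext_single using F0 by simp
  moreover have "\<forall>x y. ext F (x + y) = ext F x + ext F y" by (simp add: ext_add)
  moreover have "\<forall>x y. ext F (x * y) = ext F x * ext F y" by (simp add: ext_mult[OF Fadd])
  ultimately show ?thesis unfolding hom_def by blast
qed

type_synonym 'a AA = "'a mw \<Rightarrow>\<^sub>0 int"

definition hh :: "'a::comm_ring_1 AA \<Rightarrow> 'a" where "hh = ext unMW"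
definition LL :: "'a::comm_ring_1 \<Rightarrow> 'a AA" where "LL r = frag_of (MW r)"
definition phi :: "nat \<Rightarrow> 'a::comm_ring_1 AA \<Rightarrow> 'a AA" where
  "phi p = ext (\<lambda>m. frag_of (MW (unMW m ^ p)))"

lemma hom_hh: "hom hh"
  unfolding hh_def by (rule hom_ext) (auto simp: plus_mw_def)

lemma hh_LL: "hh (LL r) = r"
  by (simp add: hh_def LL_def ext_single)

lemma frag_pow: "(frag_of (MW r) :: 'a::comm_ring_1 AA) ^ n = frag_of (MW (r ^ n))"
proof (induction n)
  case 0 then show ?case by simp
next
  case (Suc n) then show ?case by (simp add: mult_single plus_mw_def)
qed

lemma hom_phi: "hom (phi p :: 'a::comm_ring_1 AA \<Rightarrow> 'a AA)"
  unfolding phi_def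
proof (rule hom_ext)
  show "frag_of (MW (unMW (0::'a mw) ^ p)) = 1" by simp
  fix a b :: "'a mw"
  show "frag_of (MW (unMW (a + b) ^ p)) = frag_of (MW (unMW a ^ p)) * frag_of (MW (unMW b ^ p))"
    by (simp add: mult_single plus_mw_def power_mult_distrib)
qed

lemma phi_cong:
  assumes "prime p"
  shows "dv p 1 (phi p x - (x :: 'a::comm_ring_1 AA) ^ p)"
using subset_UNIV[of "Poly_Mapping.keys x"]
  proof (induction x rule: frag_induction)
  case zero
  have "p \<noteq> 0" using assms by auto
  moreover have "phi p (0::'a AA) = 0" by (rule hom_zero[OF hom_phi])
  ultimately show ?case by (simp add: power_0_left)
next
  case (one m)
  have "(frag_of m :: 'a AA) ^ p = frag_of (MW (unMW m ^ p))"
    using frag_pow[of "unMW m" p] by simp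
  then show ?case by (simp add: phi_def ext_single)
next
  case (diff a b)
  have e: "phi p (a - b) - (a - b) ^ p = (phi p a - a ^ p) - (phi p b - b ^ p) + (((a - b) + b) ^ p - (a - b) ^ p - b ^ p)"
    using hom_diff[OF hom_phi, of p a b] by (simp add: algebra_simps)
  show ?case unfolding e
    by (intro dv_add dv_diff diff dv_binom assms)
qed

lemma dwork1:
  assumes "prime p"
  shows "dv p (Suc j) (wt p c (Suc j) - phi p (wt p (c :: nat \<Rightarrow> 'a::comm_ring_1 AA) j))"
proof -
  have p1: "p \<ge> 1" using prime_gt_0_nat[OF assms] by simp
  have ph: "phi p (wt p c j) = (\<Sum>m\<le>j. of_nat p ^ m * phi p (c m) ^ (p ^ (j - m)))"
    using hom_wt[OF hom_phi, of p p c j] by (simp add: wt_def)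
  have e: "wt p c (Suc j) - phi p (wt p c j) =
     (\<Sum>m\<le>j. of_nat p ^ m * ((c m ^ p) ^ (p ^ (j - m)) - phi p (c m) ^ (p ^ (j - m)))) + of_nat p ^ Suc j * c (Suc j)"
  proof -
    have "(\<Sum>m\<le>j. of_nat p^m * c m ^ (p^(Suc j - m))) = (\<Sum>m\<le>j. of_nat p^m * (c m ^ p) ^ (p^(j - m)))"
      by (intro sum.cong refl) (simp add: Suc_diff_le power_mult[symmetric])
    then show ?thesis unfolding wt_Suc ph
      by (simp add: right_diff_distrib sum_subtractf)
  qed
  have "dv p (Suc j) (of_nat p ^ m * ((c m ^ p) ^ (p ^ (j - m)) - phi p (c m) ^ (p ^ (j - m))))" if "m \<le> j" for m
  proof -
    have d1: "dv p (Suc 0) (c m ^ p - phi p (c m))"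
      using phi_cong[OF assms, of "c m"] dv_diff[OF dv_0, of p 1 "phi p (c m) - c m ^ p"] by simp
    have "dv p (m + (Suc 0 + (j - m))) (of_nat p ^ m * ((c m ^ p) ^ (p ^ (j - m)) - phi p (c m) ^ (p ^ (j - m))))"
      by (intro dv_pmul dv_frob_iter p1 d1)
    then show ?thesis using that by simp
  qed
  then show ?thesis unfolding e
    by (intro dv_add dv_sum) (auto simp: dv_def)
qed

lemma dwork2:
  assumes "prime p" and D: "\<And>j. dv p (Suc j) (y (Suc j) - phi p (y j))"
  shows "\<exists>c :: nat \<Rightarrow> 'a::comm_ring_1 AA. \<forall>K. wt p c K = y K"
proof (rule build_seq[where W = "wt p"])
  show "\<And>c c' K. \<forall>i\<le>K. c i = c' i \<Longrightarrow> wt p c K = wt p c' K" by (rule wt_cong)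
  show "\<exists>c. wt p c 0 = y 0" by (rule exI[of _ "\<lambda>_. y 0"]) (simp add: wt_def)
  fix K and c :: "nat \<Rightarrow> 'a AA"
  assume c: "\<forall>i\<le>K. wt p c i = y i"
  obtain s where s: "y (Suc K) - phi p (y K) = of_nat p ^ Suc K * s" using D[of K] unfolding dv_def by auto
  obtain u where u: "wt p c (Suc K) - phi p (wt p c K) = of_nat p ^ Suc K * u"
    using dwork1[OF assms(1), of K c] unfolding dv_def by auto
  have yK: "wt p c K = y K" using c by auto
  have "wt p (c(Suc K := c (Suc K) + (s - u))) (Suc K) = y (Suc K)"
    unfolding wt_upd using s u yK wt_Suc[of p c K] by (simp add: algebra_simps)
  then show "\<exists>t. wt p (c(Suc K := t)) (Suc K) = y (Suc K)" by blast
qed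

lemma wt_sub:
  assumes "prime p"
  shows "\<exists>c. \<forall>k. wt p c k = wt p a k - wt p b (k::nat) "
proof -
  define ya where "ya = wt p (LL \<circ> a)"
  define yb where "yb = wt p (LL \<circ> b)"
  define y where "y k = ya k - yb k" for k
  have "dv p (Suc j) (y (Suc j) - phi p (y j))" for j
  proof -
    have "y (Suc j) - phi p (y j) = (ya (Suc j) - phi p (ya j)) - (yb (Suc j) - phi p (yb j))"
      unfolding y_def using hom_diff[OF hom_phi, of p "ya j" "yb j"] by simp
    then show ?thesis unfolding ya_def yb_def by (simp add: dv_diff dwork1 assms)
  qed
  then obtain c where c: "\<forall>K. wt p c K = y K" using dwork2[OF assms] by blast
  have "wt p (hh \<circ> c) k = wt p a k - wt p b k" for k
  proof -
    have "wt p (hh \<circ> c) k = hh (y k)" using hom_wt[OF hom_hh, of p c k] c by simp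
    also have "\<dots> = wt p (hh \<circ> (LL \<circ> a)) k - wt p (hh \<circ> (LL \<circ> b)) k"
      unfolding y_def ya_def yb_def by (simp add: hom_diff[OF hom_hh] hom_wt[OF hom_hh])
    also have "hh \<circ> (LL \<circ> a) = a" by (simp add: fun_eq_iff hh_LL)
    also have "hh \<circ> (LL \<circ> b) = b" by (simp add: fun_eq_iff hh_LL)
    finally show ?thesis .
  qed
  then show ?thesis by blast
qed



lemma Ver_pow: "(Ver p ^^ n) f k = (if k < n then 0 else of_nat p ^ n * f (k - n))"
proof (induction n arbitrary: k)
  case 0 then show ?case by simp
next
  case (Suc n)
  show ?case
  proof (cases k)
    case 0 then show ?thesis by (simp add: Ver_def)
  next
    case (Suc j) then show ?thesis using Suc.IH[of j] by (simp add: Ver_def)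
  qed
qed

lemma partial_eq:
  assumes "k < N"
  shows "(\<Sum>n<N. (Ver p ^^ n) (teich p (a n)) k) = wt p a k"
proof -
  have "(\<Sum>n<N. (Ver p ^^ n) (teich p (a n)) k) = (\<Sum>n\<le>k. (Ver p ^^ n) (teich p (a n)) k)"
    using assms by (intro sum.mono_neutral_right) (auto simp: Ver_pow)
  also have "\<dots> = wt p a k" unfolding wt_def by (intro sum.cong) (auto simp: Ver_pow teich_def)
  finally show ?thesis .
qed

lemma limit_lemma:
  assumes "\<And>k. eventually (\<lambda>N. S N k = x k) sequentially"
  shows "limitin prodtop S x sequentially"
  unfolding prodtop_def limitin_componentwise
proof (intro conjI ballI)
  show "x \<in> extensional UNIV" by simp
  show "\<forall>\<^sub>F a in sequentially. S a \<in> topspace (product_topology (\<lambda>_. discrete_topology UNIV) UNIV)"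
    by simp
  fix k :: nat
  show "limitin (discrete_topology UNIV) (\<lambda>c. S c k) (x k) sequentially"
    unfolding limitin_def using assms[of k] by (auto elim: eventually_mono)
qed

lemma closure_lemma:
  assumes "x \<in> prodtop closure_of T"
  shows "\<exists>b\<in>T. \<forall>i\<le>K. b i = x i"
proof -
  define U where "U = PiE UNIV (\<lambda>i. if i \<le> K then {x i} else UNIV)"
  have "openin prodtop U" unfolding prodtop_def U_def openin_PiE_gen
  proof (rule disjI2, intro conjI ballI)
    show "finite {i \<in> UNIV. (if i \<le> K then {x i} else UNIV) \<noteq> topspace (discrete_topology UNIV)}"
      by (rule finite_subset[of _ "{..K}"]) auto
  qed auto
  moreover have "x \<in> U" unfolding U_def by auto
  ultimately obtain y where "y \<in> T" "y \<in> U" using assms unfolding closure_of_def by blast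
  have "y i = x i" if "i \<le> K" for i
  proof -
    have "y i \<in> (if i \<le> K then {x i} else UNIV)" using \<open>y \<in> U\<close> unfolding U_def PiE_iff by blast
    then show ?thesis using that by simp
  qed
  then show ?thesis using \<open>y \<in> T\<close> by blast
qed

lemma gen_ghost:
  assumes "prime p"
  shows "y \<in> add_subgroup_gen {(Ver p ^^ n) (teich p r) | n r. True} \<Longrightarrow> \<exists>a. y = wt p a"
proof (induction rule: add_subgroup_gen.induct)
  case zero
  have "p > 0" using prime_gt_0_nat[OF assms] .
  then have "wt p (\<lambda>_. 0) = (\<lambda>k. 0)" by (simp add: wt_def fun_eq_iff power_0_left)
  then show ?case by metis
next
  case (gen x)
  then obtain n r where x: "x = (Ver p ^^ n) (teich p r)" by auto
  have pp: "p > 0" using prime_gt_0_nat[OF assms] .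
  have "wt p (\<lambda>m. if m = n then r else 0) k = x k" for k
  proof -
    have "wt p (\<lambda>m. if m = n then r else 0) k = (\<Sum>m\<le>k. if m = n then of_nat p ^ n * r ^ (p ^ (k - n)) else 0)"
      unfolding wt_def using pp by (intro sum.cong) (auto simp: power_0_left)
    also have "\<dots> = x k" unfolding x Ver_pow teich_def by auto
    finally show ?thesis .
  qed
  then show ?case by (metis ext)
next
  case (diff x y)
  then obtain a b where "x = wt p a" "y = wt p b" by auto
  with wt_sub[OF assms, of a b] show ?case by (metis (no_types, lifting) ext)
qed

theorem lemma2p6:
  fixes p :: nat and x :: "nat \<Rightarrow> 'a::comm_ring_1"
  assumes "prime p" and "x \<in> XR p"
  shows "\<exists>a :: nat \<Rightarrow> 'a.
           limitin prodtop (\<lambda>N. (\<lambda>k. \<Sum>n<N. (Ver p ^^ n) (teich p (a n)) k)) x sequentially"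
proof -
  have p1: "p \<ge> 1" using prime_gt_0_nat[OF assms(1)] by simp
  have cl: "\<exists>a. \<forall>i\<le>K. wt p a i = x i" for K
  proof -
    obtain b where "b \<in> add_subgroup_gen {(Ver p ^^ n) (teich p r) | n r. True}" "\<forall>i\<le>K. b i = x i"
      using closure_lemma[of x _ K] assms(2) unfolding XR_def by blast
    then show ?thesis using gen_ghost[OF assms(1)] by metis
  qed
  have "\<exists>a. \<forall>K. wt p a K = x K"
  proof (rule build_seq[where W = "wt p"])
    show "\<And>c c' K. \<forall>i\<le>K. c i = c' i \<Longrightarrow> wt p c K = wt p c' K" by (rule wt_cong)
    show "\<exists>c. wt p c 0 = x 0" using cl[of 0] by auto
    fix K and c :: "nat \<Rightarrow> 'a"
    assume c: "\<forall>i\<le>K. wt p c i = x i"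
    obtain a where a: "\<forall>i\<le>Suc K. wt p a i = x i" using cl by blast
    obtain d where d: "\<forall>k. wt p d k = wt p a k - wt p c k" using wt_sub[OF assms(1)] by blast
    have z: "\<forall>i\<le>K. wt p d i = 0" using a c d by auto
    have dS: "wt p d (Suc K) = of_nat p ^ Suc K * d (Suc K)" by (rule wt_zero_next[OF p1 z])
    have "wt p (c(Suc K := c (Suc K) + d (Suc K))) (Suc K) = wt p c (Suc K) + wt p d (Suc K)"
      unfolding wt_upd dS wt_Suc[of p c K] by (simp add: algebra_simps)
    also have "\<dots> = x (Suc K)" using d a by auto
    finally show "\<exists>t. wt p (c(Suc K := t)) (Suc K) = x (Suc K)" by blast
  qed
  then obtain a where a: "\<forall>K. wt p a K = x K" by blast
  have "limitin prodtop (\<lambda>N. (\<lambda>k. \<Sum>n<N. (Ver p ^^ n) (teich p (a n)) k)) x sequentially"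
  proof (rule limit_lemma)
    fix k
    show "\<forall>\<^sub>F N in sequentially. (\<Sum>n<N. (Ver p ^^ n) (teich p (a n)) k) = x k"
      unfolding eventually_sequentially
    proof (intro exI[of _ "Suc k"] allI impI)
      fix N assume "Suc k \<le> N"
      then show "(\<Sum>n<N. (Ver p ^^ n) (teich p (a n)) k) = x k" using partial_eq[of k N p a] a by simp
    qed
  qed
  then show ?thesis by blast
qed

end
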